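(* Let $b\ge 2$ be an integer and let $w=d_1\dots d_p$ be a fixed block of $b$-ary digits of length $p\ge 1$. For each integer $k\ge 0$ let $$S_w(k)=\sum_{m}\frac1m,$$ where the sum runs over all positive integers $m$ whose minimal base-$b$ representation (the string of $b$-ary digits without leading zeros) contains exactly $k$ occurrences of $w$, counting possibly overlapping occurrences. Then for every integer $k\ge 1$, $$\Bigl|S_w(k)-b^{p}\log(b)\Bigr|\le (b-1)\,b^{\,p-\max(k,2)+1}.$$
   Context: An occurrence of $w$ in a string $X=x_1\dots x_l$ is an index $i$ with $1\le i\le l-p+1$ and $x_i x_{i+1}\dots x_{i+p-1}=w$. Different occurrences may overlap. *)

theory Defs
  imports "HOL-Analysis.Analysis"
begin

function digits_rev :: "nat \<Rightarrow> nat \<Rightarrow> nat list" where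
  "digits_rev b m = (if m = 0 \<or> b < 2 then [] else (m mod b) # digits_rev b (m div b))"
  by auto
termination by (relation "Wellfounded.measure snd") auto

declare digits_rev.simps[simp del]

definition digits :: "nat \<Rightarrow> nat \<Rightarrow> nat list" where
  "digits b m = rev (digits_rev b m)"

definition occurrences :: "'a list \<Rightarrow> 'a list \<Rightarrow> nat" where
  "occurrences w X = card {i. i + length w \<le> length X \<and> take (length w) (drop i X) = w}"

definition occ_set :: "nat \<Rightarrow> nat list \<Rightarrow> nat \<Rightarrow> nat set" where
  "occ_set b w k = {m. m > 0 \<and> occurrences w (digits b m) = k}"

end

theory Submission
  imports Defs
begin

definition sfx :: "'a list \<Rightarrow> 'a list \<Rightarrow> bool" where
  "sfx w L \<longleftrightarrow> (\<exists>A. L = A @ w)"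

lemma occ_snoc:
  assumes "w \<noteq> []"
  shows "occurrences w (X @ [d]) = occurrences w X + (if sfx w (X @ [d]) then 1 else 0)"
proof -
  let ?P = "length w"
  define S1 where "S1 = {i. i + ?P \<le> length X \<and> take ?P (drop i X) = w}"
  define S2 where "S2 = {i. i + ?P \<le> length (X@[d]) \<and> take ?P (drop i (X@[d])) = w}"
  define T where "T = (if sfx w (X @ [d]) then {length X + 1 - ?P} else {})"
  have "S2 = S1 \<union> T"
  proof (intro set_eqI iffI)
    fix i assume "i \<in> S2"
    then have h: "i + ?P \<le> length X + 1" "take ?P (drop i (X@[d])) = w" by (auto simp: S2_def)
    show "i \<in> S1 \<union> T"
    proof (cases "i + ?P \<le> length X")
      case True
      then have "take ?P (drop i (X@[d])) = take ?P (drop i X)" by simp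
      then show ?thesis using True h by (auto simp: S1_def)
    next
      case False
      then have eq: "i + ?P = length X + 1" using h by simp
      then have "length (drop i (X@[d])) = ?P" by simp
      then have "drop i (X@[d]) = w" using h(2) by simp
      then have "sfx w (X@[d])" unfolding sfx_def by (metis append_take_drop_id)
      then show ?thesis using eq by (auto simp: T_def)
    qed
  next
    fix i assume "i \<in> S1 \<union> T"
    then show "i \<in> S2"
    proof
      assume "i \<in> S1" then show ?thesis by (auto simp: S1_def S2_def)
    next
      assume "i \<in> T"
      then have s: "sfx w (X@[d])" and i: "i = length X + 1 - ?P" by (auto simp: T_def split: if_splits)
      from s obtain A where A: "X @ [d] = A @ w" unfolding sfx_def by blast
      have "length (X @ [d]) = length (A @ w)" using A by simp
      then have "length A + ?P = length X + 1" by simp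
      then have "length A = i" using i by simp
      then show ?thesis unfolding S2_def using A by simp
    qed
  qed
  moreover have "finite S1" unfolding S1_def by (rule finite_subset[of _ "{..length X}"]) auto
  moreover have "S1 \<inter> T = {}" using assms by (auto simp: S1_def T_def)
  moreover have "card T = (if sfx w (X @ [d]) then 1 else 0)" by (simp add: T_def)
  ultimately have "card S2 = card S1 + (if sfx w (X @ [d]) then 1 else 0)"
    by (simp add: card_Un_disjoint T_def)
  then show ?thesis by (simp add: occurrences_def S1_def S2_def)
qed


lemma occ_short:
  assumes "length L < length w"
  shows "occurrences w L = 0"
  using assms unfolding occurrences_def by auto

lemma occ_le_length: "occurrences w L \<le> length L + 1 - length w"
proof -
  have "{i. i + length w \<le> length L \<and> take (length w) (drop i L) = w} \<subseteq> {..<length L + 1 - length w}"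
    by auto
  then show ?thesis unfolding occurrences_def
    by (metis card_lessThan card_mono finite_lessThan)
qed

lemma sfx_append_long:
  assumes "length w \<le> length M"
  shows "sfx w (A @ M) \<longleftrightarrow> sfx w M"
proof
  assume "sfx w (A @ M)"
  then obtain B where B: "A @ M = B @ w" unfolding sfx_def by blast
  then obtain us where "(A = B @ us \<and> us @ M = w) \<or> (A @ us = B \<and> M = us @ w)"
    by (auto simp: append_eq_append_conv2)
  then show "sfx w M"
  proof
    assume h: "A = B @ us \<and> us @ M = w"
    then have "length us + length M = length w" by (metis length_append)
    then have "us = []" using assms by (cases us) auto
    then show ?thesis using h unfolding sfx_def by auto
  next
    assume "A @ us = B \<and> M = us @ w" then show ?thesis unfolding sfx_def by auto
  qed
next
  assume "sfx w M" then show "sfx w (A @ M)" unfolding sfx_def by auto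
qed

lemma sfx_self: "sfx w (A @ w)" unfolding sfx_def by auto

lemma occ_mono:
  assumes "w \<noteq> []"
  shows "occurrences w X \<le> occurrences w (X @ S)"
proof (induction S rule: rev_induct)
  case Nil then show ?case by simp
next
  case (snoc d S)
  then show ?case using occ_snoc[OF assms, of "X @ S" d] by simp
qed

lemma occ_super:
  assumes "w \<noteq> []"
  shows "occurrences w X + occurrences w S \<le> occurrences w (X @ S)"
proof (induction S rule: rev_induct)
  case Nil then show ?case using occ_short[of "[]" w] assms by simp
next
  case (snoc d S)
  have "sfx w (S @ [d]) \<Longrightarrow> sfx w (X @ S @ [d])" unfolding sfx_def by auto
  then show ?case using occ_snoc[OF assms, of "X @ S" d] occ_snoc[OF assms, of S d] snoc
    by (auto split: if_splits)
qed

lemma occ_self: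
  assumes "w \<noteq> []"
  shows "occurrences w w = 1"
proof -
  have w: "w = butlast w @ [last w]" using assms by simp
  have "occurrences w (butlast w) = 0" using assms by (intro occ_short) simp
  moreover have "sfx w (butlast w @ [last w])" using w sfx_self[of w "[]"] by simp
  ultimately show ?thesis using occ_snoc[OF assms, of "butlast w" "last w"] w by simp
qed

lemma occ_join:
  assumes "w \<noteq> []"
  shows "occurrences w (A @ w @ S) = occurrences w (A @ w) + occurrences w (w @ S) - 1"
proof (induction S rule: rev_induct)
  case Nil then show ?case using occ_self[OF assms] by simp
next
  case (snoc d S)
  have 1: "occurrences w (w @ S) \<ge> 1" using occ_mono[OF assms, of w S] occ_self[OF assms] by simp
  have "sfx w (A @ (w @ S @ [d])) = sfx w (w @ S @ [d])" by (rule sfx_append_long) simp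
  then show ?case using occ_snoc[OF assms, of "A @ w @ S" d] occ_snoc[OF assms, of "w @ S" d] snoc 1
    by auto
qed

lemma occ_last:
  assumes "w \<noteq> []" "occurrences w u \<ge> 1"
  shows "\<exists>A S. u = A @ w @ S \<and> occurrences w (w @ S) = 1"
  using assms(2)
proof (induction u rule: rev_induct)
  case Nil then show ?case using occ_short[of "[]" w] assms(1) by simp
next
  case (snoc d u)
  show ?case
  proof (cases "sfx w (u @ [d])")
    case True
    then obtain A where "u @ [d] = A @ w" unfolding sfx_def by blast
    then show ?thesis using occ_self[OF assms(1)] by (intro exI[of _ A] exI[of _ "[]"]) simp
  next
    case False
    then have "occurrences w u \<ge> 1" using snoc.prems occ_snoc[OF assms(1), of u d] by simp
    then obtain A S where AS: "u = A @ w @ S" "occurrences w (w @ S) = 1" using snoc.IH by blast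
    have "sfx w (A @ (w @ S @ [d])) = sfx w (w @ S @ [d])" by (rule sfx_append_long) simp
    then have "\<not> sfx w (w @ S @ [d])" using False AS by simp
    then have "occurrences w (w @ S @ [d]) = 1" using AS(2) occ_snoc[OF assms(1), of "w @ S" d] by simp
    then show ?thesis using AS by (intro exI[of _ A] exI[of _ "S @ [d]"]) simp
  qed
qed

lemma occ_two:
  assumes "w \<noteq> []" "X \<noteq> []" "w @ S1 = X @ w @ S2"
  shows "occurrences w (X @ w) \<ge> 2"
proof -
  obtain v c where w: "w = v @ [c]" using assms(1) by (metis rev_exhaust)
  have len: "length w \<le> length (X @ v)" using assms(2) w by (cases X) auto
  have e: "X @ w @ S2 = (X @ v) @ (c # S2)" using w by simp
  have "take (length w) (X @ v) = take (length w) (X @ w @ S2)"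
    unfolding e using len by simp
  also have "\<dots> = w" using assms(3)[symmetric] by simp
  finally have "X @ v = w @ drop (length w) (X @ v)"
    by (metis append_take_drop_id)
  then have "occurrences w (X @ v) \<ge> 1"
    using occ_mono[OF assms(1), of w "drop (length w) (X @ v)"] occ_self[OF assms(1)] by simp
  moreover have "sfx w ((X @ v) @ [c])" using w sfx_self[of w X] by simp
  ultimately show ?thesis using occ_snoc[OF assms(1), of "X @ v" c] w by simp
qed


lemma occ_unique:
  assumes "w \<noteq> []" "A1 @ w @ S1 = A2 @ w @ S2"
    "occurrences w (w @ S1) = 1" "occurrences w (w @ S2) = 1"
  shows "A1 = A2 \<and> S1 = S2"
proof -
  have key: False if "X \<noteq> []" "w @ T1 = X @ w @ T2" "occurrences w (w @ T1) = 1"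
      "occurrences w (w @ T2) = 1" for X T1 T2
  proof -
    have "occurrences w (X @ w) \<ge> 2" using occ_two[OF assms(1) that(1,2)] .
    moreover have "occurrences w (X @ w @ T2) = occurrences w (X @ w) + occurrences w (w @ T2) - 1"
      by (rule occ_join[OF assms(1)])
    ultimately show False using that by simp
  qed
  have "\<exists>us. (A1 = A2 @ us \<and> us @ (w @ S1) = w @ S2) \<or> (A1 @ us = A2 \<and> w @ S1 = us @ (w @ S2))"
    using assms(2) by (rule append_eq_append_conv2[THEN iffD1])
  then obtain us where
    "(A1 = A2 @ us \<and> us @ w @ S1 = w @ S2) \<or> (A1 @ us = A2 \<and> w @ S1 = us @ w @ S2)"
    by blast
  then show ?thesis
  proof
    assume h: "A1 = A2 @ us \<and> us @ w @ S1 = w @ S2"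
    show ?thesis
    proof (cases "us = []")
      case True then show ?thesis using h by simp
    next
      case False then show ?thesis using key[of us S2 S1] h assms by simp
    qed
  next
    assume h: "A1 @ us = A2 \<and> w @ S1 = us @ w @ S2"
    show ?thesis
    proof (cases "us = []")
      case True then show ?thesis using h by simp
    next
      case False then show ?thesis using key[of us S1 S2] h assms by simp
    qed
  qed
qed

definition vl :: "nat \<Rightarrow> nat list \<Rightarrow> nat" where
  "vl b L = foldl (\<lambda>a d. a * b + d) 0 L"

lemma vl_Nil[simp]: "vl b [] = 0" by (simp add: vl_def)

lemma vl_single[simp]: "vl b [d] = d" by (simp add: vl_def)

lemma vl_snoc[simp]: "vl b (L @ [d]) = vl b L * b + d" by (simp add: vl_def)

lemma vl_append: "vl b (L @ M) = vl b L * b ^ length M + vl b M"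
proof (induction M rule: rev_induct)
  case Nil then show ?case by simp
next
  case (snoc d M)
  have "vl b (L @ M @ [d]) = vl b (L @ M) * b + d" using vl_snoc[of b "L @ M" d] by simp
  then show ?case using snoc by (simp add: algebra_simps)
qed

lemma vl_lt: "set M \<subseteq> {..<b} \<Longrightarrow> vl b M < b ^ length M"
proof (induction M rule: rev_induct)
  case Nil then show ?case by simp
next
  case (snoc d M)
  then have "vl b M + 1 \<le> b ^ length M" "d < b" by auto
  then have "vl b M * b + d < (vl b M + 1) * b" by (simp add: algebra_simps)
  also have "\<dots> \<le> b ^ length M * b" using \<open>vl b M + 1 \<le> b ^ length M\<close> by (intro mult_right_mono) auto
  finally show ?case by (simp add: mult.commute)
qed

lemma vl_Cons: "vl b (d # M) = d * b ^ length M + vl b M"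
  using vl_append[of b "[d]" M] by (simp add: vl_def)

lemma vl_ge: "L \<noteq> [] \<Longrightarrow> hd L \<noteq> 0 \<Longrightarrow> b ^ (length L - 1) \<le> vl b L"
  by (cases L) (auto simp: vl_Cons trans_le_add1)

definition Good :: "nat \<Rightarrow> nat list set" where
  "Good b = {L. L \<noteq> [] \<and> hd L \<noteq> 0 \<and> set L \<subseteq> {..<b}}"

lemma digits_rev_0[simp]: "digits_rev b 0 = []"
  by (subst digits_rev.simps) simp

lemma digits_rev_eq: "b \<ge> 2 \<Longrightarrow> digits_rev b m = (if m = 0 then [] else m mod b # digits_rev b (m div b))"
  by (subst digits_rev.simps) auto

lemma digits_rev_vl:
  assumes "b \<ge> 2" "set L \<subseteq> {..<b}" "L = [] \<or> hd L \<noteq> 0"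
  shows "digits_rev b (vl b L) = rev L"
  using assms(2,3)
proof (induction L rule: rev_induct)
  case Nil then show ?case by (simp add: digits_rev_0)
next
  case (snoc d L)
  have db: "d < b" using snoc.prems by auto
  show ?case
  proof (cases "L = []")
    case True
    then have "d \<noteq> 0" using snoc.prems by simp
    then show ?thesis using True db by (simp add: digits_rev_eq[OF assms(1), of d] digits_rev_0)
  next
    case False
    then have "hd L \<noteq> 0" using snoc.prems by simp
    have "(1::nat) \<le> b ^ (length L - 1)" using assms(1) by simp
    then have "vl b L \<ge> 1" using vl_ge[OF False \<open>hd L \<noteq> 0\<close>, of b] by linarith
    then have pos: "vl b L * b + d \<noteq> 0" using assms(1) by (simp add: mult_eq_0_iff)
    have "(vl b L * b + d) mod b = d" "(vl b L * b + d) div b = vl b L" using db assms(1) by auto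
    moreover have "digits_rev b (vl b L) = rev L" using snoc False by auto
    ultimately show ?thesis using pos by (subst digits_rev_eq[OF assms(1)]) simp
  qed
qed

lemma digits_vl: "b \<ge> 2 \<Longrightarrow> L \<in> Good b \<Longrightarrow> digits b (vl b L) = L"
  unfolding digits_def Good_def by (simp add: digits_rev_vl)

lemma vl_digits: "b \<ge> 2 \<Longrightarrow> vl b (digits b m) = m"
proof (induction m rule: less_induct)
  case (less m)
  show ?case
  proof (cases "m = 0")
    case True then show ?thesis by (simp add: digits_def digits_rev_0)
  next
    case False
    have "m div b < m" using False less.prems by simp
    then have "vl b (digits b (m div b)) = m div b" using less by simp
    moreover have "digits b m = digits b (m div b) @ [m mod b]"
      using False by (simp add: digits_def digits_rev_eq[OF less.prems, of m])
    ultimately show ?thesis by simp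
  qed
qed

lemma last_digits_rev: "b \<ge> 2 \<Longrightarrow> m > 0 \<Longrightarrow> digits_rev b m \<noteq> [] \<and> last (digits_rev b m) \<noteq> 0"
proof (induction m rule: less_induct)
  case (less m)
  show ?case
  proof (cases "m div b = 0")
    case True
    then have "m < b" using less.prems by (simp add: div_eq_0_iff)
    then show ?thesis using less.prems True by (simp add: digits_rev_eq[of b m] digits_rev_0)
  next
    case False
    then have "m div b < m" "m div b > 0" using less.prems by auto
    then show ?thesis using less.IH[of "m div b"] less.prems by (simp add: digits_rev_eq[of b m])
  qed
qed

lemma set_digits_rev: "b \<ge> 2 \<Longrightarrow> set (digits_rev b m) \<subseteq> {..<b}"
proof (induction m rule: less_induct)
  case (less m)
  show ?case
  proof (cases "m = 0")
    case True then show ?thesis by (simp add: digits_rev_0)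
  next
    case False
    then have "m div b < m" using less.prems by simp
    then show ?thesis using less False by (simp add: digits_rev_eq[of b m])
  qed
qed

lemma digits_good: "b \<ge> 2 \<Longrightarrow> m > 0 \<Longrightarrow> digits b m \<in> Good b"
  using last_digits_rev[of b m] set_digits_rev[of b m]
  by (simp add: Good_def digits_def hd_rev)


locale kw =
  fixes b :: nat and w :: "nat list"
  assumes b2: "2 \<le> b" and wne: "w \<noteq> []" and wd: "set w \<subseteq> {..<b}"
begin

abbreviation "occ L \<equiv> occurrences w L"
abbreviation "p \<equiv> length w"

definition Wd :: "nat \<Rightarrow> nat list set" where
  "Wd n = {S. set S \<subseteq> {..<b} \<and> length S = n}"

definition E :: "nat \<Rightarrow> nat list set" where
  "E j = {S \<in> Wd j. occ (w @ S) = 1}"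

definition Yk :: "nat \<Rightarrow> nat \<Rightarrow> nat list set" where
  "Yk k n = {S \<in> Wd n. occ S < k}"

lemma finite_Wd[simp]: "finite (Wd n)"
  unfolding Wd_def by (rule finite_lists_length_eq) simp

lemma card_Wd: "card (Wd n) = b ^ n"
  unfolding Wd_def using card_lists_length_eq[of "{..<b}" n] by simp

lemma finite_E[simp]: "finite (E j)" unfolding E_def by simp
lemma finite_Yk[simp]: "finite (Yk k n)" unfolding Yk_def by simp

lemma kac_card:
  "b ^ (J + p) = card (Yk 1 (J + p)) + (\<Sum>e\<le>J. b ^ e * card (E (J - e)))"
proof -
  let ?n = "J + p"
  let ?f = "\<lambda>(A, S). A @ w @ S"
  define M where "M e = ?f ` (Wd e \<times> E (J - e))" for e
  have inj: "inj_on ?f (Wd e \<times> E (J - e))" for e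
    unfolding inj_on_def E_def by (auto dest: occ_unique[OF wne])
  have cardM: "card (M e) = b ^ e * card (E (J - e))" for e
    unfolding M_def by (simp add: card_image[OF inj] card_cartesian_product card_Wd)
  have finM: "finite (M e)" for e unfolding M_def by simp
  have disj: "M e1 \<inter> M e2 = {}" if "e1 \<noteq> e2" for e1 e2
  proof (rule ccontr)
    assume "M e1 \<inter> M e2 \<noteq> {}"
    then obtain A1 S1 A2 S2 where h: "A1 \<in> Wd e1" "S1 \<in> E (J - e1)" "A2 \<in> Wd e2" "S2 \<in> E (J - e2)"
      "A1 @ w @ S1 = A2 @ w @ S2" unfolding M_def by auto
    then have "A1 = A2" using occ_unique[OF wne h(5)] by (auto simp: E_def)
    then show False using h that by (auto simp: Wd_def)
  qed
  have occ_pos: "occ (A @ w @ S) \<noteq> 0" for A S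
    using occ_super[OF wne, of A w] occ_mono[OF wne, of "A @ w" S] occ_self[OF wne] by simp
  have split: "Wd ?n = Yk 1 ?n \<union> (\<Union>e\<in>{..J}. M e)"
  proof (intro set_eqI iffI)
    fix u assume u: "u \<in> Wd ?n"
    show "u \<in> Yk 1 ?n \<union> (\<Union>e\<in>{..J}. M e)"
    proof (cases "occ u = 0")
      case True then show ?thesis using u by (simp add: Yk_def)
    next
      case False
      then obtain A S where AS: "u = A @ w @ S" "occ (w @ S) = 1" using occ_last[OF wne, of u] by auto
      have "length A + p + length S = ?n" using u AS by (simp add: Wd_def)
      then have "length A \<le> J" "length S = J - length A" by auto
      moreover have "A \<in> Wd (length A)" "S \<in> Wd (length S)" using u AS by (auto simp: Wd_def)
      ultimately have "u \<in> M (length A)" unfolding M_def E_def using AS by auto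
      then show ?thesis using \<open>length A \<le> J\<close> by blast
    qed
  next
    fix u assume "u \<in> Yk 1 ?n \<union> (\<Union>e\<in>{..J}. M e)"
    then show "u \<in> Wd ?n"
    proof
      assume "u \<in> Yk 1 ?n" then show ?thesis by (simp add: Yk_def)
    next
      assume "u \<in> (\<Union>e\<in>{..J}. M e)"
      then obtain e A S where "e \<le> J" "A \<in> Wd e" "S \<in> E (J - e)" "u = A @ w @ S"
        unfolding M_def by auto
      then show ?thesis using wd by (auto simp: Wd_def E_def)
    qed
  qed
  have d2: "Yk 1 ?n \<inter> (\<Union>e\<in>{..J}. M e) = {}"
    by (auto simp: Yk_def M_def occ_pos)
  have "card (Wd ?n) = card (Yk 1 ?n) + card (\<Union>e\<in>{..J}. M e)"
    unfolding split by (rule card_Un_disjoint[OF _ _ d2]) (auto simp: finM)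
  also have "card (\<Union>e\<in>{..J}. M e) = (\<Sum>e\<le>J. card (M e))"
    by (rule card_UN_disjoint) (auto simp: finM disj)
  finally show ?thesis by (simp add: card_Wd cardM)
qed

lemma Yk_split_sub:
  "Yk (Suc k) (n + m) \<subseteq> (\<lambda>(x, y). x @ y) ` (Yk k n \<times> Wd m) \<union> (\<lambda>(x, y). x @ y) ` (Wd n \<times> Yk 1 m)"
proof
  fix u assume u: "u \<in> Yk (Suc k) (n + m)"
  define x where "x = take n u"
  define y where "y = drop n u"
  have uxy: "u = x @ y" by (simp add: x_def y_def)
  have x: "x \<in> Wd n" and y: "y \<in> Wd m" using u by (auto simp: Yk_def Wd_def x_def y_def dest: in_set_takeD in_set_dropD)
  have "occ x + occ y \<le> occ u" unfolding uxy by (rule occ_super[OF wne])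
  then have "occ x < k \<or> occ y < 1" using u by (auto simp: Yk_def)
  then show "u \<in> (\<lambda>(x, y). x @ y) ` (Yk k n \<times> Wd m) \<union> (\<lambda>(x, y). x @ y) ` (Wd n \<times> Yk 1 m)"
  proof
    assume "occ x < k"
    then have "(x, y) \<in> Yk k n \<times> Wd m" using x y by (simp add: Yk_def)
    then show ?thesis unfolding uxy by blast
  next
    assume "occ y < 1"
    then have "(x, y) \<in> Wd n \<times> Yk 1 m" using x y by (simp add: Yk_def)
    then show ?thesis unfolding uxy by blast
  qed
qed

lemma card_Yk_split: "card (Yk (Suc k) (n + m)) \<le> card (Yk k n) * b ^ m + b ^ n * card (Yk 1 m)"
proof -
  have "card (Yk (Suc k) (n + m)) \<le> card ((\<lambda>(x, y). x @ y) ` (Yk k n \<times> Wd m) \<union> (\<lambda>(x, y). x @ y) ` (Wd n \<times> Yk 1 m))"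
    by (rule card_mono[OF _ Yk_split_sub]) simp
  also have "\<dots> \<le> card ((\<lambda>(x, y). x @ y) ` (Yk k n \<times> Wd m)) + card ((\<lambda>(x, y). x @ y) ` (Wd n \<times> Yk 1 m))"
    by (rule card_Un_le)
  also have "\<dots> \<le> card (Yk k n \<times> Wd m) + card (Wd n \<times> Yk 1 m)"
    by (intro add_mono card_image_le) auto
  finally show ?thesis by (simp add: card_cartesian_product card_Wd)
qed

lemma Yk1_mult_sub: "Yk 1 (n + m) \<subseteq> (\<lambda>(x, y). x @ y) ` (Yk 1 n \<times> Yk 1 m)"
proof
  fix u assume u: "u \<in> Yk 1 (n + m)"
  define x where "x = take n u"
  define y where "y = drop n u"
  have uxy: "u = x @ y" by (simp add: x_def y_def)
  have x: "x \<in> Wd n" and y: "y \<in> Wd m" using u by (auto simp: Yk_def Wd_def x_def y_def dest: in_set_takeD in_set_dropD)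
  have "occ x + occ y \<le> occ u" unfolding uxy by (rule occ_super[OF wne])
  then have "(x, y) \<in> Yk 1 n \<times> Yk 1 m" using u x y by (auto simp: Yk_def)
  then show "u \<in> (\<lambda>(x, y). x @ y) ` (Yk 1 n \<times> Yk 1 m)" unfolding uxy by blast
qed

lemma card_Yk1_mult: "card (Yk 1 (n + m)) \<le> card (Yk 1 n) * card (Yk 1 m)"
proof -
  have "card (Yk 1 (n + m)) \<le> card ((\<lambda>(x, y). x @ y) ` (Yk 1 n \<times> Yk 1 m))"
    by (rule card_mono[OF _ Yk1_mult_sub]) simp
  also have "\<dots> \<le> card (Yk 1 n \<times> Yk 1 m)" by (rule card_image_le) simp
  finally show ?thesis by (simp add: card_cartesian_product)
qed

lemma card_Yk1_p: "card (Yk 1 p) \<le> b ^ p - 1"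
proof -
  have "w \<in> Wd p" using wd by (simp add: Wd_def)
  have "Yk 1 p \<subseteq> Wd p - {w}" using occ_self[OF wne] by (auto simp: Yk_def)
  then have "card (Yk 1 p) \<le> card (Wd p - {w})" by (intro card_mono) auto
  also have "\<dots> = b ^ p - 1" using \<open>w \<in> Wd p\<close> by (simp add: card_Wd)
  finally show ?thesis .
qed

lemma card_Yk1_pow: "card (Yk 1 (q * p)) \<le> (b ^ p - 1) ^ q"
proof (induction q)
  case 0
  have "Yk 1 0 \<subseteq> {[]}" by (auto simp: Yk_def Wd_def)
  then have "card (Yk 1 0) \<le> 1" using card_mono[of "{[]}" "Yk 1 0"] by simp
  then show ?case by simp
next
  case (Suc q)
  have "card (Yk 1 (p + q * p)) \<le> card (Yk 1 p) * card (Yk 1 (q * p))" by (rule card_Yk1_mult)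
  also have "\<dots> \<le> (b ^ p - 1) * (b ^ p - 1) ^ q" using card_Yk1_p Suc by (intro mult_mono) auto
  finally show ?case by simp
qed

lemma card_Yk_Suc: "card (Yk k (Suc n)) \<le> card (Yk k n) * b"
proof -
  have "Yk k (Suc n) \<subseteq> (\<lambda>(x, d). x @ [d]) ` (Yk k n \<times> {..<b})"
  proof
    fix u assume u: "u \<in> Yk k (Suc n)"
    then obtain x d where uxd: "u = x @ [d]" by (cases u rule: rev_cases) (auto simp: Yk_def Wd_def)
    have "occ x \<le> occ u" unfolding uxd by (rule occ_mono[OF wne])
    then have "(x, d) \<in> Yk k n \<times> {..<b}" using u uxd by (auto simp: Yk_def Wd_def)
    then show "u \<in> (\<lambda>(x, d). x @ [d]) ` (Yk k n \<times> {..<b})" unfolding uxd by (rule rev_image_eqI) simp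
  qed
  then have "card (Yk k (Suc n)) \<le> card ((\<lambda>(x, d). x @ [d]) ` (Yk k n \<times> {..<b}))"
    by (intro card_mono) auto
  also have "\<dots> \<le> card (Yk k n \<times> {..<b})" by (rule card_image_le) simp
  finally show ?thesis by (simp add: card_cartesian_product)
qed

definition hk :: "nat \<Rightarrow> nat \<Rightarrow> real" where
  "hk k n = real (card (Yk k n)) / real b ^ n"

lemma hk_nonneg: "hk k n \<ge> 0" by (simp add: hk_def)

lemma hk_Suc: "hk k (Suc n) \<le> hk k n"
proof -
  have bpos: "real b > 0" using b2 by simp
  have "real (card (Yk k (Suc n))) \<le> real (card (Yk k n)) * real b"
    using card_Yk_Suc[of k n] by (metis of_nat_le_iff of_nat_mult)
  then show ?thesis unfolding hk_def using bpos by (simp add: divide_simps mult.commute)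
qed

lemma hk_mono: "m \<le> n \<Longrightarrow> hk k n \<le> hk k m"
proof (induction n rule: dec_induct)
  case base then show ?case by simp
next
  case (step n) then show ?case using hk_Suc[of k n] by linarith
qed

lemma hk1_pow: "hk 1 (q * p) \<le> (1 - 1 / real b ^ p) ^ q"
proof -
  have bpos: "real b > 0" using b2 by simp
  have bp1: "1 \<le> b ^ p" using b2 by simp
  have "real (card (Yk 1 (q * p))) \<le> real ((b ^ p - 1) ^ q)"
    using card_Yk1_pow by (metis of_nat_le_iff)
  also have "\<dots> = (real b ^ p - 1) ^ q" using bp1 by (simp add: of_nat_diff)
  finally have "hk 1 (q * p) \<le> (real b ^ p - 1) ^ q / real b ^ (q * p)"
    unfolding hk_def using bpos by (intro divide_right_mono) auto
  also have "\<dots> = (1 - 1 / real b ^ p) ^ q"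
  proof -
    have "(1 - 1 / real b ^ p) = (real b ^ p - 1) / real b ^ p" using bpos by (simp add: field_simps)
    then have "(1 - 1 / real b ^ p) ^ q = (real b ^ p - 1) ^ q / (real b ^ p) ^ q" by (simp add: power_divide)
    moreover have "(real b ^ p) ^ q = real b ^ (q * p)" by (simp add: power_mult[symmetric] mult.commute)
    ultimately show ?thesis by simp
  qed
  finally show ?thesis .
qed

lemma hk1_small: "\<epsilon> > 0 \<Longrightarrow> \<exists>N. \<forall>n\<ge>N. hk 1 n < \<epsilon>"
proof -
  assume e: "\<epsilon> > 0"
  have b1: "real b > 1" using b2 by simp
  have bpos: "real b ^ p > 1" using wne by (intro one_less_power[OF b1]) simp
  have bp0: "real b ^ p > 0" using bpos by linarith
  have r: "1 - 1 / real b ^ p < 1" using bp0 by simp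
  obtain q where q: "(1 - 1 / real b ^ p) ^ q < \<epsilon>" using real_arch_pow_inv[OF e r(1)] by blast
  have "hk 1 n < \<epsilon>" if "n \<ge> q * p" for n
    using hk_mono[OF that, of 1] hk1_pow[of q] q by linarith
  then show ?thesis by blast
qed

lemma hk_double: "hk (Suc k) (2 * m) \<le> hk k m + hk 1 m"
proof -
  have bpos: "real b > 0" using b2 by simp
  have "real (card (Yk (Suc k) (m + m))) \<le> real (card (Yk k m)) * real b ^ m + real b ^ m * real (card (Yk 1 m))"
    using card_Yk_split[of k m m] by (metis of_nat_le_iff of_nat_mult of_nat_add of_nat_power)
  then have "real (card (Yk (Suc k) (m + m))) / real b ^ (m + m) \<le> (real (card (Yk k m)) * real b ^ m + real b ^ m * real (card (Yk 1 m))) / real b ^ (m + m)"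
    using bpos by (intro divide_right_mono) auto
  also have "\<dots> = hk k m + hk 1 m" unfolding hk_def using bpos by (simp add: power_add field_simps)
  finally show ?thesis unfolding hk_def by (simp add: mult_2)
qed

lemma hk_small: "\<epsilon> > 0 \<Longrightarrow> \<exists>N. \<forall>n\<ge>N. hk k n < \<epsilon>"
proof (induction k arbitrary: \<epsilon>)
  case 0
  have "Yk 0 n = {}" for n by (simp add: Yk_def)
  then show ?case using 0 by (simp add: hk_def)
next
  case (Suc k)
  have e2: "\<epsilon> / 2 > 0" using Suc.prems by simp
  obtain N1 where N1: "\<forall>n\<ge>N1. hk k n < \<epsilon> / 2" using Suc.IH[OF e2] by blast
  obtain N2 where N2: "\<forall>n\<ge>N2. hk 1 n < \<epsilon> / 2" using hk1_small[OF e2] by blast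
  have "hk (Suc k) n < \<epsilon>" if "n \<ge> 2 * (N1 + N2)" for n
  proof -
    have "2 * (n div 2) \<le> n" by simp
    then have "hk (Suc k) n \<le> hk (Suc k) (2 * (n div 2))" by (rule hk_mono)
    also have "\<dots> \<le> hk k (n div 2) + hk 1 (n div 2)" by (rule hk_double)
    also have "\<dots> < \<epsilon>"
    proof -
      have "(2 * (N1 + N2)) div 2 \<le> n div 2" by (rule div_le_mono[OF that])
      then have "N1 \<le> n div 2" "N2 \<le> n div 2" by auto
      then show ?thesis using N1 N2 by fastforce
    qed
    finally show ?thesis .
  qed
  then show ?case by blast
qed

definition fl :: "real \<Rightarrow> real" where "fl x = ln (1 + 1 / x)"
definition gl :: "real \<Rightarrow> real" where "gl x = 1 / x - 1 / (x + 1)"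

abbreviation "v L \<equiv> real (vl b L)"

definition Desc :: "nat \<Rightarrow> nat list \<Rightarrow> nat list set" where
  "Desc N Y = (\<lambda>S. Y @ S) ` Wd (N - length Y)"

definition Lev :: "nat \<Rightarrow> nat list set" where
  "Lev N = {L \<in> Good b. length L = N}"

lemma fl_child:
  fixes x :: real
  assumes "x > 0"
  shows "(\<Sum>d<b. fl (x * real b + real d)) = fl x"
proof -
  have bpos: "real b > 0" using b2 by simp
  have "(\<Sum>d<b. fl (x * real b + real d)) = (\<Sum>d<b. ln (x * b + real (Suc d)) - ln (x * b + real d))"
  proof (rule sum.cong[OF refl])
    fix d assume "d \<in> {..<b}"
    have p: "x * b + real d > 0" using assms bpos by (simp add: add_pos_nonneg)
    then have "1 + 1 / (x * b + real d) = (x * b + real (Suc d)) / (x * b + real d)" by (simp add: field_simps)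
    then show "fl (x * b + d) = ln (x * b + real (Suc d)) - ln (x * b + real d)"
      unfolding fl_def using p by (simp add: ln_div)
  qed
  also have "\<dots> = ln (x * b + real b) - ln (x * b + real 0)"
    by (rule sum_lessThan_telescope)
  also have "\<dots> = fl x"
  proof -
    have "x * b + real b = (x + 1) * b" by (simp add: algebra_simps)
    moreover have "1 + 1 / x = (x + 1) / x" using assms by (simp add: field_simps)
    ultimately show ?thesis unfolding fl_def using assms bpos by (simp add: ln_div ln_mult)
  qed
  finally show ?thesis .
qed

lemma gl_child:
  fixes x :: real
  assumes "x > 0"
  shows "(\<Sum>d<b. gl (x * real b + real d)) = gl x / real b"
proof -
  have bpos: "real b > 0" using b2 by simp
  have "(\<Sum>d<b. gl (x * real b + real d)) = (\<Sum>d<b. 1 / (x * b + real d) - 1 / (x * b + real (Suc d)))"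
    by (rule sum.cong[OF refl]) (simp add: gl_def add.assoc)
  also have "\<dots> = 1 / (x * b + real 0) - 1 / (x * b + real b)"
    by (rule sum_lessThan_telescope')
  also have "\<dots> = gl x / b"
  proof -
    have "x * b + real b = (x + 1) * b" by (simp add: algebra_simps)
    then have "1 / (x * b + real 0) - 1 / (x * b + real b) = (1 / x) / b - (1 / (x + 1)) / b"
      by simp
    then show ?thesis unfolding gl_def by (simp add: diff_divide_distrib)
  qed
  finally show ?thesis .
qed

lemma sum_Wd_Suc: "(\<Sum>S\<in>Wd (Suc t). F S) = (\<Sum>S\<in>Wd t. \<Sum>d<b. F (S @ [d]))"
proof -
  have eq: "Wd (Suc t) = (\<lambda>(S, d). S @ [d]) ` (Wd t \<times> {..<b})"
  proof (intro set_eqI iffI)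
    fix u assume u: "u \<in> Wd (Suc t)"
    then obtain x d where uxd: "u = x @ [d]" by (cases u rule: rev_cases) (auto simp: Wd_def)
    then have "(x, d) \<in> Wd t \<times> {..<b}" using u by (auto simp: Wd_def)
    then show "u \<in> (\<lambda>(S, d). S @ [d]) ` (Wd t \<times> {..<b})" unfolding uxd by (rule rev_image_eqI) simp
  next
    fix u assume "u \<in> (\<lambda>(S, d). S @ [d]) ` (Wd t \<times> {..<b})"
    then show "u \<in> Wd (Suc t)" by (auto simp: Wd_def)
  qed
  have inj: "inj_on (\<lambda>(S, d). S @ [d]) (Wd t \<times> {..<b})" by (auto simp: inj_on_def)
  have "(\<Sum>S\<in>Wd (Suc t). F S) = (\<Sum>x\<in>Wd t \<times> {..<b}. F ((\<lambda>(S, d). S @ [d]) x))"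
    unfolding eq by (subst sum.reindex[OF inj]) simp
  also have "\<dots> = (\<Sum>(S, d)\<in>Wd t \<times> {..<b}. F (S @ [d]))" by (rule sum.cong) auto
  also have "\<dots> = (\<Sum>S\<in>Wd t. \<Sum>d<b. F (S @ [d]))" by (rule sum.cartesian_product[symmetric])
  finally show ?thesis .
qed

lemma Good_app: "Y \<in> Good b \<Longrightarrow> S \<in> Wd t \<Longrightarrow> Y @ S \<in> Good b"
  by (auto simp: Good_def Wd_def)

lemma v_pos: "Y \<in> Good b \<Longrightarrow> v Y > 0"
proof -
  assume Y: "Y \<in> Good b"
  have "(1::nat) \<le> b ^ (length Y - 1)" using b2 by simp
  also have "\<dots> \<le> vl b Y" using Y by (intro vl_ge) (auto simp: Good_def)
  finally show ?thesis by simp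
qed

lemma v_ge: "Y \<in> Good b \<Longrightarrow> v Y \<ge> real b ^ (length Y - 1)"
proof -
  assume Y: "Y \<in> Good b"
  have "b ^ (length Y - 1) \<le> vl b Y" using Y by (intro vl_ge) (auto simp: Good_def)
  then show ?thesis by (metis of_nat_le_iff of_nat_power)
qed

lemma sum_Wd_fl: "Y \<in> Good b \<Longrightarrow> (\<Sum>S\<in>Wd t. fl (v (Y @ S))) = fl (v Y)"
proof (induction t)
  case 0
  have "Wd 0 = {[]}" by (auto simp: Wd_def)
  then show ?case by simp
next
  case (Suc t)
  have "(\<Sum>S\<in>Wd (Suc t). fl (v (Y @ S))) = (\<Sum>S\<in>Wd t. \<Sum>d<b. fl (v (Y @ S) * b + d))"
    unfolding sum_Wd_Suc by (intro sum.cong refl) (simp flip: append_assoc)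
  also have "\<dots> = (\<Sum>S\<in>Wd t. fl (v (Y @ S)))"
    by (intro sum.cong refl fl_child v_pos Good_app[OF Suc.prems])
  finally show ?case using Suc by simp
qed

lemma sum_Wd_gl: "Y \<in> Good b \<Longrightarrow> (\<Sum>S\<in>Wd t. gl (v (Y @ S))) = gl (v Y) / real b ^ t"
proof (induction t)
  case 0
  have "Wd 0 = {[]}" by (auto simp: Wd_def)
  then show ?case by simp
next
  case (Suc t)
  have "(\<Sum>S\<in>Wd (Suc t). gl (v (Y @ S))) = (\<Sum>S\<in>Wd t. \<Sum>d<b. gl (v (Y @ S) * b + d))"
    unfolding sum_Wd_Suc by (intro sum.cong refl) (simp flip: append_assoc)
  also have "\<dots> = (\<Sum>S\<in>Wd t. gl (v (Y @ S)) / b)"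
    by (intro sum.cong refl gl_child v_pos Good_app[OF Suc.prems])
  also have "\<dots> = (\<Sum>S\<in>Wd t. gl (v (Y @ S))) / b" by (simp add: sum_divide_distrib)
  finally show ?case using Suc by simp
qed

lemma sum_Desc:
  "(\<Sum>u\<in>Desc N Y. F u) = (\<Sum>S\<in>Wd (N - length Y). F (Y @ S))"
  unfolding Desc_def by (simp add: sum.reindex inj_on_def)

lemma finite_Desc[simp]: "finite (Desc N Y)" unfolding Desc_def by simp

lemma Desc_Lev:
  assumes "Y \<in> Good b" "length Y \<le> N"
  shows "Desc N Y \<subseteq> Lev N"
proof
  fix u assume "u \<in> Desc N Y"
  then obtain S where S: "S \<in> Wd (N - length Y)" "u = Y @ S" by (auto simp: Desc_def)
  then have "u \<in> Good b" using Good_app[OF assms(1)] by simp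
  moreover have "length u = N" using S assms(2) by (simp add: Wd_def)
  ultimately show "u \<in> Lev N" by (simp add: Lev_def)
qed

lemma Lev_eq: "N \<ge> 1 \<Longrightarrow> Lev N = (\<Union>d\<in>{1..<b}. Desc N [d])"
proof (intro set_eqI iffI)
  fix u assume N: "N \<ge> 1" and u: "u \<in> Lev N"
  then obtain d S where uds: "u = d # S" by (cases u) (auto simp: Lev_def Good_def)
  then have "d \<in> {1..<b}" "S \<in> Wd (N - 1)" using u by (auto simp: Lev_def Good_def Wd_def)
  then have "u \<in> Desc N [d]" unfolding uds Desc_def by (intro rev_image_eqI[of S]) simp_all
  then show "u \<in> (\<Union>d\<in>{1..<b}. Desc N [d])" using \<open>d \<in> {1..<b}\<close> by blast
next
  fix u assume N: "N \<ge> 1" and "u \<in> (\<Union>d\<in>{1..<b}. Desc N [d])"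
  then obtain d where "d \<in> {1..<b}" "u \<in> Desc N [d]" by blast
  then obtain S where S: "S \<in> Wd (N - 1)" "u = [d] @ S" by (auto simp: Desc_def)
  then show "u \<in> Lev N" using N \<open>d \<in> {1..<b}\<close> by (auto simp: Lev_def Good_def Wd_def)
qed

lemma Lev_sub: "Lev N \<subseteq> Wd N" by (auto simp: Lev_def Good_def Wd_def)

lemma finite_Lev[simp]: "finite (Lev N)"
  by (rule finite_subset[OF Lev_sub finite_Wd])

lemma sum_Lev:
  assumes "N \<ge> 1"
  shows "(\<Sum>u\<in>Lev N. F u) = (\<Sum>d\<in>{1..<b}. \<Sum>u\<in>Desc N [d]. F u)"
  unfolding Lev_eq[OF assms]
  by (rule sum.UNION_disjoint) (auto simp: Desc_def)

lemma Lev_fl: "N \<ge> 1 \<Longrightarrow> (\<Sum>u\<in>Lev N. fl (v u)) = ln b"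
proof -
  assume N: "N \<ge> 1"
  have "(\<Sum>u\<in>Lev N. fl (v u)) = (\<Sum>d\<in>{1..<b}. fl (real d))"
    unfolding sum_Lev[OF N] sum_Desc
    by (intro sum.cong refl) (subst sum_Wd_fl, auto simp: Good_def)
  also have "\<dots> = (\<Sum>d\<in>{1..<b}. ln (real (Suc d)) - ln (real d))"
    by (intro sum.cong refl) (simp add: fl_def field_simps ln_div)
  also have "\<dots> = ln (real b) - ln (real 1)"
    using b2 by (subst sum_Suc_diff') auto
  finally show ?thesis by simp
qed

lemma Lev_gl: "N \<ge> 1 \<Longrightarrow> (\<Sum>u\<in>Lev N. gl (v u)) = (1 - 1 / b) / real b ^ (N - 1)"
proof -
  assume N: "N \<ge> 1"
  have "(\<Sum>u\<in>Lev N. gl (v u)) = (\<Sum>d\<in>{1..<b}. gl (real d) / real b ^ (N - 1))"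
    unfolding sum_Lev[OF N] sum_Desc
    by (intro sum.cong refl) (subst sum_Wd_gl, auto simp: Good_def)
  also have "\<dots> = (\<Sum>d\<in>{1..<b}. 1 / real d - 1 / real (Suc d)) / real b ^ (N - 1)"
    by (simp add: sum_divide_distrib gl_def add.commute)
  also have "(\<Sum>d\<in>{1..<b}. 1 / real d - 1 / real (Suc d)) = 1 / real 1 - 1 / real b"
  proof -
    have "(\<Sum>d\<in>{1..<b}. 1 / real d - 1 / real (Suc d)) = (\<Sum>d\<in>{1..<b}. (- 1 / real (Suc d)) - (- 1 / real d))"
      by simp
    also have "\<dots> = (- 1 / real b) - (- 1 / real 1)" by (rule sum_Suc_diff') (use b2 in auto)
    finally show ?thesis by simp
  qed
  finally show ?thesis by simp
qed

lemma fl_nonneg: "x > 0 \<Longrightarrow> fl x \<ge> 0" by (simp add: fl_def)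
lemma gl_nonneg: "x > 0 \<Longrightarrow> gl x \<ge> 0" by (simp add: gl_def frac_le)
lemma fl_le: "x > 0 \<Longrightarrow> fl x \<le> 1 / x" unfolding fl_def by (rule ln_add_one_self_le_self) simp
lemma fl_ge: "x > 0 \<Longrightarrow> 1 / (x + 1) \<le> fl x"
proof -
  assume x: "x > 0"
  have "ln (x / (x + 1)) \<le> x / (x + 1) - 1" using x by (intro ln_le_minus_one) simp
  moreover have "ln (x / (x + 1)) = - ln (1 + 1 / x)" using x
    by (simp add: ln_div field_simps)
  moreover have "x / (x + 1) - 1 = - (1 / (x + 1))" using x by (simp add: field_simps)
  ultimately show ?thesis unfolding fl_def by linarith
qed

definition CK :: "nat \<Rightarrow> nat list set" where
  "CK k = {Y \<in> Good b. occ Y = k \<and> sfx w Y}"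

lemma CK_pf: "Y \<in> CK k \<Longrightarrow> Y @ X \<in> CK k \<Longrightarrow> X = []"
proof (rule ccontr)
  assume Y: "Y \<in> CK k" and YX: "Y @ X \<in> CK k" and X: "X \<noteq> []"
  then obtain X' d where X': "X = X' @ [d]" by (cases X rule: rev_cases) auto
  have "sfx w ((Y @ X') @ [d])" using YX X' by (simp add: CK_def)
  then have "occ ((Y @ X') @ [d]) = occ (Y @ X') + 1" using occ_snoc[OF wne, of "Y @ X'" d] by simp
  moreover have "occ Y \<le> occ (Y @ X')" by (rule occ_mono[OF wne])
  ultimately show False using Y YX X' by (simp add: CK_def)
qed

lemma CK_eq: "Y1 \<in> CK k \<Longrightarrow> Y2 \<in> CK k \<Longrightarrow> Y1 @ S1 = Y2 @ S2 \<Longrightarrow> Y1 = Y2"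
proof -
  assume a: "Y1 \<in> CK k" "Y2 \<in> CK k" "Y1 @ S1 = Y2 @ S2"
  have "\<exists>us. (Y1 = Y2 @ us \<and> us @ S1 = S2) \<or> (Y1 @ us = Y2 \<and> S1 = us @ S2)"
    using a(3) by (rule append_eq_append_conv2[THEN iffD1])
  then obtain us where "(Y1 = Y2 @ us \<and> us @ S1 = S2) \<or> (Y1 @ us = Y2 \<and> S1 = us @ S2)" by blast
  then show "Y1 = Y2" using CK_pf[of Y2 k us] CK_pf[of Y1 k us] a(1,2) by auto
qed

lemma CK_len: "k \<ge> 1 \<Longrightarrow> Y \<in> CK k \<Longrightarrow> length Y \<ge> k + p - 1"
  using occ_le_length[of w Y] by (auto simp: CK_def)

lemma CK_Good: "Y \<in> CK k \<Longrightarrow> Y \<in> Good b" by (simp add: CK_def)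

lemma Desc_disj: "Y1 \<in> CK k \<Longrightarrow> Y2 \<in> CK k \<Longrightarrow> Y1 \<noteq> Y2 \<Longrightarrow> Desc N Y1 \<inter> Desc N Y2 = {}"
  unfolding Desc_def using CK_eq by blast

lemma Q_sum:
  assumes "finite Q" "Q \<subseteq> CK k"
  shows "(\<Sum>Y\<in>Q. \<Sum>u\<in>Desc N Y. F u) = (\<Sum>u\<in>(\<Union>Y\<in>Q. Desc N Y). F u)"
proof (rule sum.UNION_disjoint[symmetric])
  show "finite Q" by fact
  show "\<forall>i\<in>Q. finite (Desc N i)" by simp
  show "\<forall>i\<in>Q. \<forall>j\<in>Q. i \<noteq> j \<longrightarrow> Desc N i \<inter> Desc N j = {}" using assms(2) Desc_disj by blast
qed

lemma Q_fl:
  assumes "finite Q" "Q \<subseteq> CK k" "\<forall>Y\<in>Q. length Y \<le> N" "N \<ge> 1"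
  shows "(\<Sum>Y\<in>Q. fl (v Y)) = (\<Sum>u\<in>(\<Union>Y\<in>Q. Desc N Y). fl (v u))"
proof -
  have "(\<Sum>Y\<in>Q. fl (v Y)) = (\<Sum>Y\<in>Q. \<Sum>u\<in>Desc N Y. fl (v u))"
    by (intro sum.cong refl) (use assms in \<open>auto simp: sum_Desc sum_Wd_fl CK_Good\<close>)
  also have "\<dots> = (\<Sum>u\<in>(\<Union>Y\<in>Q. Desc N Y). fl (v u))" by (rule Q_sum[OF assms(1,2)])
  finally show ?thesis .
qed

lemma UDesc_Lev:
  assumes "Q \<subseteq> CK k" "\<forall>Y\<in>Q. length Y \<le> N"
  shows "(\<Union>Y\<in>Q. Desc N Y) \<subseteq> Lev N"
  using Desc_Lev assms CK_Good by blast

lemma Lev_Good: "u \<in> Lev N \<Longrightarrow> u \<in> Good b" by (simp add: Lev_def)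

lemma Q_fl_le:
  assumes "finite Q" "Q \<subseteq> CK k" "\<forall>Y\<in>Q. length Y \<le> N" "N \<ge> 1"
  shows "(\<Sum>Y\<in>Q. fl (v Y)) \<le> ln b"
proof -
  have "(\<Sum>u\<in>(\<Union>Y\<in>Q. Desc N Y). fl (v u)) \<le> (\<Sum>u\<in>Lev N. fl (v u))"
    by (rule sum_mono2[OF finite_Lev UDesc_Lev[OF assms(2,3)]])
      (auto intro: fl_nonneg v_pos Lev_Good)
  then show ?thesis using Q_fl[OF assms] Lev_fl[OF assms(4)] by simp
qed

lemma Q_gl_le:
  assumes "finite Q" "Q \<subseteq> CK k" "\<forall>Y\<in>Q. length Y \<le> N \<and> m \<le> length Y" "m \<ge> 1"
  shows "(\<Sum>Y\<in>Q. gl (v Y)) \<le> (1 - 1 / b) / real b ^ (m - 1)"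
proof -
  have bpos: "real b > 0" using b2 by simp
  have mN: "m \<le> N" if "Q \<noteq> {}" using assms(3) that by fastforce
  show ?thesis
  proof (cases "Q = {}")
    case True then show ?thesis using bpos by simp
  next
    case False
    have N: "N \<ge> 1" using mN[OF False] assms(4) by simp
    have "(\<Sum>Y\<in>Q. gl (v Y)) \<le> (\<Sum>Y\<in>Q. real b ^ (N - m) * (\<Sum>u\<in>Desc N Y. gl (v u)))"
    proof (rule sum_mono)
      fix Y assume Y: "Y \<in> Q"
      then have YG: "Y \<in> Good b" using assms(2) CK_Good by blast
      have le: "N - length Y \<le> N - m" using assms(3) Y by auto
      have "(\<Sum>u\<in>Desc N Y. gl (v u)) = gl (v Y) / real b ^ (N - length Y)"
        by (simp add: sum_Desc sum_Wd_gl[OF YG])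
      moreover have pw: "real b ^ (N - length Y) \<le> real b ^ (N - m)"
        using le b2 by (intro power_increasing) auto
      moreover have "gl (v Y) \<ge> 0" by (rule gl_nonneg[OF v_pos[OF YG]])
      ultimately have eq: "gl (v Y) = real b ^ (N - length Y) * (\<Sum>u\<in>Desc N Y. gl (v u))"
        and s0: "(\<Sum>u\<in>Desc N Y. gl (v u)) \<ge> 0" using bpos by auto
      show "gl (v Y) \<le> real b ^ (N - m) * (\<Sum>u\<in>Desc N Y. gl (v u))"
        unfolding eq by (rule mult_right_mono[OF pw s0])
    qed
    also have "\<dots> = real b ^ (N - m) * (\<Sum>u\<in>(\<Union>Y\<in>Q. Desc N Y). gl (v u))"
      by (simp add: sum_distrib_left[symmetric] Q_sum[OF assms(1,2)])
    also have "\<dots> \<le> real b ^ (N - m) * (\<Sum>u\<in>Lev N. gl (v u))"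
      using assms(3) by (intro mult_left_mono sum_mono2[OF finite_Lev UDesc_Lev[OF assms(2)]])
        (auto intro: gl_nonneg v_pos Lev_Good)
    also have "\<dots> = real b ^ (N - m) * ((1 - 1 / b) / real b ^ (N - 1))" by (simp add: Lev_gl[OF N])
    also have "\<dots> = (1 - 1 / b) / real b ^ (m - 1)"
    proof -
      have "real b ^ (N - 1) = real b ^ (N - m) * real b ^ (m - 1)"
        using mN[OF False] assms(4) by (simp add: power_add[symmetric])
      then show ?thesis using bpos by simp
    qed
    finally show ?thesis .
  qed
qed

lemma cover:
  assumes "k \<ge> 1" "u \<in> Lev N" "occ u \<ge> k"
  shows "\<exists>Y\<in>CK k. length Y \<le> N \<and> u \<in> Desc N Y"
proof -
  have lenu: "length u = N" using assms(2) by (simp add: Lev_def)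
  define n0 where "n0 = (LEAST n. k \<le> occ (take n u))"
  have ex: "k \<le> occ (take N u)" using assms(3) lenu by simp
  have n0: "k \<le> occ (take n0 u)" unfolding n0_def by (rule LeastI[of _ N]) (rule ex)
  have n0N: "n0 \<le> N" unfolding n0_def by (rule Least_le) (rule ex)
  have n0pos: "n0 \<noteq> 0" using n0 assms(1) occ_short[of "[]" w] wne by (cases "n0 = 0") auto
  define n1 where "n1 = n0 - 1"
  have n1: "n0 = Suc n1" using n0pos by (simp add: n1_def)
  have less: "\<not> k \<le> occ (take n1 u)" unfolding n1_def n0_def
    by (rule not_less_Least) (use n0pos n0_def in simp)
  have n1u: "n1 < length u" using n0N lenu n1 by simp
  have tk: "take n0 u = take n1 u @ [u ! n1]" using n1 n1u by (simp add: take_Suc_conv_app_nth)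
  have snoc: "occ (take n0 u) = occ (take n1 u) + (if sfx w (take n0 u) then 1 else 0)"
    using occ_snoc[OF wne, of "take n1 u" "u ! n1"] tk by simp
  then have s: "sfx w (take n0 u)" and k: "occ (take n0 u) = k" using n0 less by (auto split: if_splits)
  have uG: "u \<in> Good b" using assms(2) by (simp add: Lev_def)
  have "take n0 u \<in> Good b" using uG n0pos n1u n1
    by (cases u) (auto simp: Good_def dest: in_set_takeD)
  then have Y: "take n0 u \<in> CK k" using s k by (simp add: CK_def)
  have "drop n0 u \<in> Wd (N - length (take n0 u))" using uG lenu n0N
    by (auto simp: Wd_def Good_def dest: in_set_dropD)
  then have "u \<in> Desc N (take n0 u)" unfolding Desc_def by (intro rev_image_eqI[of "drop n0 u"]) simp_all
  then show ?thesis using Y n0N by (intro bexI[of _ "take n0 u"]) auto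
qed

definition GK :: "nat \<Rightarrow> nat list set" where
  "GK k = {L \<in> Good b. occ L = k}"

definition EJ :: "nat \<Rightarrow> nat list set" where
  "EJ J = (\<Union>j\<in>{..J}. E j)"

lemma finite_EJ[simp]: "finite (EJ J)" by (simp add: EJ_def)

lemma dec1:
  assumes "k \<ge> 1" "u \<in> GK k"
  shows "\<exists>Y S. u = Y @ S \<and> Y \<in> CK k \<and> S \<in> E (length S)"
proof -
  have uG: "u \<in> Good b" and ok: "occ u = k" using assms by (auto simp: GK_def)
  obtain A S where AS: "u = A @ w @ S" "occ (w @ S) = 1" using occ_last[OF wne, of u] ok assms(1) by auto
  have j: "occ u = occ (A @ w)" using occ_join[OF wne, of A S] AS by simp
  have "A @ w \<in> Good b" using uG AS wne by (cases A) (auto simp: Good_def)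
  then have "A @ w \<in> CK k" using j ok by (simp add: CK_def sfx_self)
  moreover have "S \<in> E (length S)" using uG AS by (auto simp: E_def Wd_def Good_def)
  ultimately show ?thesis using AS by (intro exI[of _ "A @ w"] exI[of _ S]) simp
qed

lemma dec2:
  assumes "Y \<in> CK k" "S \<in> E j"
  shows "Y @ S \<in> GK k"
proof -
  obtain A where A: "Y = A @ w" using assms(1) by (auto simp: CK_def sfx_def)
  have "occ (A @ w @ S) = occ (A @ w) + occ (w @ S) - 1" by (rule occ_join[OF wne])
  then have "occ (Y @ S) = k" using assms A by (simp add: CK_def E_def)
  moreover have "Y @ S \<in> Good b" using assms by (intro Good_app[of Y S j]) (auto simp: CK_def E_def)
  ultimately show ?thesis by (simp add: GK_def)
qed

lemma v_app_bounds:
  assumes "Y \<in> Good b" "S \<in> Wd j"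
  shows "v Y * real b ^ j \<le> v (Y @ S)" "v (Y @ S) \<le> (v Y + 1) * real b ^ j"
proof -
  have e: "vl b (Y @ S) = vl b Y * b ^ j + vl b S" using assms(2) by (simp add: vl_append Wd_def)
  have lt: "vl b S < b ^ j" using assms(2) vl_lt[of S b] by (simp add: Wd_def)
  show "v Y * real b ^ j \<le> v (Y @ S)" unfolding e by simp
  have e': "v (Y @ S) = v Y * real b ^ j + v S" unfolding e by simp
  have lt': "v S < real b ^ j" using lt by (metis of_nat_less_iff of_nat_power)
  show "v (Y @ S) \<le> (v Y + 1) * real b ^ j" unfolding e' using lt' by (simp add: algebra_simps)
qed

lemma kac_real: "(\<Sum>j\<le>J. real (card (E j)) / real b ^ j) = real b ^ p * (1 - hk 1 (J + p))"
proof -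
  have bpos: "real b > 0" using b2 by simp
  have "real b ^ (J + p) = real (card (Yk 1 (J + p))) + (\<Sum>e\<le>J. real b ^ e * real (card (E (J - e))))"
    using kac_card[of J] by (metis (mono_tags, lifting) of_nat_add of_nat_mult of_nat_power of_nat_sum sum.cong)
  moreover have "real b ^ (J + p) \<noteq> 0" using bpos by simp
  ultimately have "1 = (real (card (Yk 1 (J + p))) + (\<Sum>e\<le>J. real b ^ e * real (card (E (J - e))))) / real b ^ (J + p)"
    by (metis divide_self)
  then have "1 = hk 1 (J + p) + (\<Sum>e\<le>J. real b ^ e * real (card (E (J - e)))) / real b ^ (J + p)"
    unfolding hk_def by (simp add: add_divide_distrib)
  also have "(\<Sum>e\<le>J. real b ^ e * real (card (E (J - e)))) / real b ^ (J + p)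
      = (\<Sum>e\<le>J. real (card (E (J - e))) / real b ^ (J - e)) / real b ^ p"
  proof -
    have "(\<Sum>e\<le>J. real b ^ e * real (card (E (J - e)))) / real b ^ (J + p)
       = (\<Sum>e\<le>J. real b ^ e * real (card (E (J - e))) / real b ^ (J + p))" by (simp add: sum_divide_distrib)
    also have "\<dots> = (\<Sum>e\<le>J. real (card (E (J - e))) / real b ^ (J - e) / real b ^ p)"
    proof (rule sum.cong[OF refl])
      fix e assume "e \<in> {..J}"
      then have "real b ^ (J + p) = real b ^ e * real b ^ (J - e) * real b ^ p"
        by (simp add: power_add[symmetric])
      then show "real b ^ e * real (card (E (J - e))) / real b ^ (J + p) = real (card (E (J - e))) / real b ^ (J - e) / real b ^ p"
        using bpos by (simp add: field_simps)
    qed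
    finally show ?thesis by (simp add: sum_divide_distrib)
  qed
  also have "(\<Sum>e\<le>J. real (card (E (J - e))) / real b ^ (J - e)) = (\<Sum>j\<le>J. real (card (E j)) / real b ^ j)"
    using sum.atLeastAtMost_rev[of "\<lambda>j. real (card (E j)) / real b ^ j" 0 J] by (simp add: atMost_atLeast0)
  finally show ?thesis using bpos by (simp add: field_simps)
qed

lemma sum_EJ: "(\<Sum>S\<in>EJ J. F S) = (\<Sum>j\<le>J. \<Sum>S\<in>E j. F S)"
  unfolding EJ_def
proof (rule sum.UNION_disjoint)
  show "finite {..J}" by simp
  show "\<forall>i\<in>{..J}. finite (E i)" by simp
  show "\<forall>i\<in>{..J}. \<forall>j\<in>{..J}. i \<noteq> j \<longrightarrow> E i \<inter> E j = {}" by (auto simp: E_def Wd_def)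
qed

lemma inner_upper:
  assumes "Y \<in> Good b"
  shows "(\<Sum>S\<in>EJ J. 1 / v (Y @ S)) \<le> real b ^ p / v Y"
proof -
  have vp: "v Y > 0" by (rule v_pos[OF assms])
  have bpos: "real b > 0" using b2 by simp
  have "(\<Sum>S\<in>EJ J. 1 / v (Y @ S)) = (\<Sum>j\<le>J. \<Sum>S\<in>E j. 1 / v (Y @ S))" by (rule sum_EJ)
  also have "\<dots> \<le> (\<Sum>j\<le>J. \<Sum>S\<in>E j. 1 / (v Y * real b ^ j))"
  proof (intro sum_mono)
    fix j S assume "S \<in> E j"
    then have S: "S \<in> Wd j" by (simp add: E_def)
    have "v (Y @ S) > 0" by (rule v_pos[OF Good_app[OF assms S]])
    then show "1 / v (Y @ S) \<le> 1 / (v Y * real b ^ j)"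
      using v_app_bounds(1)[OF assms S] vp bpos by (intro divide_left_mono) auto
  qed
  also have "\<dots> = (\<Sum>j\<le>J. real (card (E j)) / real b ^ j) / v Y"
    by (simp add: sum_divide_distrib field_simps)
  also have "\<dots> = real b ^ p * (1 - hk 1 (J + p)) / v Y" by (simp add: kac_real)
  also have "\<dots> \<le> real b ^ p / v Y"
    using vp hk_nonneg[of 1 "J + p"] bpos by (intro divide_right_mono) (auto simp: mult_left_le)
  finally show ?thesis .
qed

lemma inner_lower:
  assumes "Y \<in> Good b"
  shows "real b ^ p * (1 - hk 1 (J + p)) / (v Y + 1) \<le> (\<Sum>S\<in>EJ J. 1 / v (Y @ S))"
proof -
  have vp: "v Y > 0" by (rule v_pos[OF assms])
  have bpos: "real b > 0" using b2 by simp
  have "real b ^ p * (1 - hk 1 (J + p)) / (v Y + 1) = (\<Sum>j\<le>J. real (card (E j)) / real b ^ j) / (v Y + 1)"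
    by (simp add: kac_real)
  also have "\<dots> = (\<Sum>j\<le>J. \<Sum>S\<in>E j. 1 / ((v Y + 1) * real b ^ j))"
    by (simp add: sum_divide_distrib field_simps)
  also have "\<dots> \<le> (\<Sum>j\<le>J. \<Sum>S\<in>E j. 1 / v (Y @ S))"
  proof (intro sum_mono)
    fix j S assume "S \<in> E j"
    then have S: "S \<in> Wd j" by (simp add: E_def)
    have "v (Y @ S) > 0" by (rule v_pos[OF Good_app[OF assms S]])
    then show "1 / ((v Y + 1) * real b ^ j) \<le> 1 / v (Y @ S)"
      using v_app_bounds(2)[OF assms S] by (intro divide_left_mono) auto
  qed
  also have "\<dots> = (\<Sum>S\<in>EJ J. 1 / v (Y @ S))" by (rule sum_EJ[symmetric])
  finally show ?thesis .
qed

definition Fin :: "nat list set \<Rightarrow> nat \<Rightarrow> nat list set" where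
  "Fin Q J = (\<lambda>(Y, S). Y @ S) ` (Q \<times> EJ J)"

lemma sum_Fin:
  assumes "finite Q" "Q \<subseteq> CK k"
  shows "(\<Sum>u\<in>Fin Q J. F u) = (\<Sum>Y\<in>Q. \<Sum>S\<in>EJ J. F (Y @ S))"
proof -
  have inj: "inj_on (\<lambda>(Y, S). Y @ S) (Q \<times> EJ J)"
  proof (rule inj_onI)
    fix x y assume h: "x \<in> Q \<times> EJ J" "y \<in> Q \<times> EJ J" "(\<lambda>(Y, S). Y @ S) x = (\<lambda>(Y, S). Y @ S) y"
    obtain Y1 S1 Y2 S2 where xy: "x = (Y1, S1)" "y = (Y2, S2)" by (cases x, cases y) auto
    have e: "Y1 @ S1 = Y2 @ S2" using h(3) xy by simp
    then have "Y1 = Y2" using CK_eq[of Y1 k Y2 S1 S2] assms(2) h(1,2) xy by auto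
    then show "x = y" using e xy by simp
  qed
  have "(\<Sum>u\<in>Fin Q J. F u) = (\<Sum>x\<in>Q \<times> EJ J. F ((\<lambda>(Y, S). Y @ S) x))"
    unfolding Fin_def by (subst sum.reindex[OF inj]) simp
  also have "\<dots> = (\<Sum>(Y, S)\<in>Q \<times> EJ J. F (Y @ S))" by (rule sum.cong) auto
  also have "\<dots> = (\<Sum>Y\<in>Q. \<Sum>S\<in>EJ J. F (Y @ S))" by (rule sum.cartesian_product[symmetric])
  finally show ?thesis .
qed

lemma Fin_GK: "Q \<subseteq> CK k \<Longrightarrow> Fin Q J \<subseteq> GK k"
  unfolding Fin_def EJ_def using dec2 by auto

lemma finite_Fin: "finite Q \<Longrightarrow> finite (Fin Q J)" unfolding Fin_def by simp

lemma hk_le1: "hk k n \<le> 1"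
proof -
  have "card (Yk k n) \<le> card (Wd n)" by (intro card_mono) (auto simp: Yk_def)
  then have "real (card (Yk k n)) \<le> real b ^ n" by (metis card_Wd of_nat_le_iff of_nat_power)
  then show ?thesis unfolding hk_def using b2 by (simp add: divide_le_eq_1)
qed

definition QN :: "nat \<Rightarrow> nat \<Rightarrow> nat list set" where
  "QN k N = {Y \<in> CK k. length Y \<le> N}"

lemma finite_QN[simp]: "finite (QN k N)"
proof -
  have "QN k N \<subseteq> {xs. set xs \<subseteq> {..<b} \<and> length xs \<le> N}" by (auto simp: QN_def CK_def Good_def)
  moreover have "finite {xs. set xs \<subseteq> {..<b} \<and> length xs \<le> N}" by (rule finite_lists_length_le) simp
  ultimately show ?thesis using finite_subset by blast
qed

lemma QN_sub: "QN k N \<subseteq> CK k" by (auto simp: QN_def)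

definition G :: "nat \<Rightarrow> real" where "G k = (1 - 1 / b) / real b ^ (k + p - 2)"

lemma G_nonneg: "G k \<ge> 0" using b2 by (simp add: G_def)

lemma Q_gl_G:
  assumes "k \<ge> 1" "finite Q" "Q \<subseteq> CK k" "\<forall>Y\<in>Q. length Y \<le> N"
  shows "(\<Sum>Y\<in>Q. gl (v Y)) \<le> G k"
proof -
  have "(\<Sum>Y\<in>Q. gl (v Y)) \<le> (1 - 1 / b) / real b ^ (k + p - 1 - 1)"
  proof -
    have pge: "p \<ge> 1" using wne by (cases w) auto
    have m1: "k + p - 1 \<ge> 1" using pge assms(1) by simp
    have "\<forall>Y\<in>Q. length Y \<le> N \<and> k + p - 1 \<le> length Y"
      using assms CK_len[OF assms(1)] by blast
    from Q_gl_le[OF assms(2,3) this m1] show ?thesis .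
  qed
  moreover have "k + p - 1 - 1 = k + p - 2" by simp
  ultimately show ?thesis by (simp add: G_def)
qed

lemma inv_le_fl_gl: "x > 0 \<Longrightarrow> 1 / x \<le> fl x + gl x"
  using fl_ge[of x] by (simp add: gl_def)

lemma inv1_ge: "x > 0 \<Longrightarrow> fl x - gl x \<le> 1 / (x + 1)"
  using fl_le[of x] by (simp add: gl_def)

lemma finite_sum_upper:
  assumes k: "k \<ge> 1" and F: "finite F" "F \<subseteq> GK k"
  shows "(\<Sum>u\<in>F. 1 / v u) \<le> real b ^ p * (ln b + G k)"
proof -
  obtain M where M: "\<forall>u\<in>F. length u \<le> M"
    using finite_nat_set_iff_bounded_le[THEN iffD1, OF finite_imageI[OF F(1), of length]] by auto
  have sub: "F \<subseteq> Fin (QN k M) M"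
  proof
    fix u assume u: "u \<in> F"
    then obtain Y S where YS: "u = Y @ S" "Y \<in> CK k" "S \<in> E (length S)" using dec1[OF k] F by blast
    have "length Y \<le> M" "length S \<le> M" using M u YS by auto
    then have "(Y, S) \<in> QN k M \<times> EJ M" using YS by (auto simp: QN_def EJ_def)
    then show "u \<in> Fin (QN k M) M" unfolding Fin_def YS(1) by (rule rev_image_eqI) simp
  qed
  have "(\<Sum>u\<in>F. 1 / v u) \<le> (\<Sum>u\<in>Fin (QN k M) M. 1 / v u)"
    by (rule sum_mono2[OF finite_Fin[OF finite_QN] sub]) simp
  also have "\<dots> = (\<Sum>Y\<in>QN k M. \<Sum>S\<in>EJ M. 1 / v (Y @ S))" by (rule sum_Fin[OF finite_QN QN_sub])
  also have "\<dots> \<le> (\<Sum>Y\<in>QN k M. real b ^ p * (fl (v Y) + gl (v Y)))"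
  proof (rule sum_mono)
    fix Y assume "Y \<in> QN k M"
    then have YG: "Y \<in> Good b" by (auto simp: QN_def CK_def)
    have "(\<Sum>S\<in>EJ M. 1 / v (Y @ S)) \<le> real b ^ p / v Y" by (rule inner_upper[OF YG])
    also have "\<dots> = real b ^ p * (1 / v Y)" by simp
    also have "\<dots> \<le> real b ^ p * (fl (v Y) + gl (v Y))"
      using inv_le_fl_gl[OF v_pos[OF YG]] by (intro mult_left_mono) auto
    finally show "(\<Sum>S\<in>EJ M. 1 / v (Y @ S)) \<le> real b ^ p * (fl (v Y) + gl (v Y))" .
  qed
  also have "\<dots> = real b ^ p * ((\<Sum>Y\<in>QN k M. fl (v Y)) + (\<Sum>Y\<in>QN k M. gl (v Y)))"
    by (simp add: sum_distrib_left[symmetric] sum.distrib)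
  also have "\<dots> \<le> real b ^ p * (ln b + G k)"
  proof (intro mult_left_mono add_mono)
    show "(\<Sum>Y\<in>QN k M. fl (v Y)) \<le> ln b"
      by (rule Q_fl_le[OF finite_QN QN_sub, of _ _ "M + 1"]) (auto simp: QN_def)
    show "(\<Sum>Y\<in>QN k M. gl (v Y)) \<le> G k"
      by (rule Q_gl_G[OF k finite_QN QN_sub, of _ M]) (auto simp: QN_def)
  qed simp
  finally show ?thesis .
qed

lemma mass_lower:
  assumes k: "k \<ge> 1" and N: "N \<ge> 1"
  shows "ln b - real b * hk k N \<le> (\<Sum>Y\<in>QN k N. fl (v Y))"
proof -
  have bpos: "real b > 0" using b2 by simp
  let ?B = "{u \<in> Lev N. occ u < k}"
  have cov: "Lev N - ?B \<subseteq> (\<Union>Y\<in>QN k N. Desc N Y)"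
  proof
    fix u assume "u \<in> Lev N - ?B"
    then have "u \<in> Lev N" "occ u \<ge> k" by auto
    then obtain Y where "Y \<in> CK k" "length Y \<le> N" "u \<in> Desc N Y" using cover[OF k] by blast
    then show "u \<in> (\<Union>Y\<in>QN k N. Desc N Y)" by (auto simp: QN_def)
  qed
  have "ln b = (\<Sum>u\<in>Lev N. fl (v u))" using Lev_fl[OF N] by simp
  also have "\<dots> = (\<Sum>u\<in>Lev N - ?B. fl (v u)) + (\<Sum>u\<in>?B. fl (v u))"
    by (rule sum.subset_diff) auto
  also have "(\<Sum>u\<in>Lev N - ?B. fl (v u)) \<le> (\<Sum>u\<in>(\<Union>Y\<in>QN k N. Desc N Y). fl (v u))"
  proof (rule sum_mono2[OF _ cov])
    show "finite (\<Union>Y\<in>QN k N. Desc N Y)" by simp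
    show "\<And>u. u \<in> (\<Union>Y\<in>QN k N. Desc N Y) - (Lev N - ?B) \<Longrightarrow> 0 \<le> fl (v u)"
      using UDesc_Lev[OF QN_sub, of k N N] by (auto simp: QN_def intro!: fl_nonneg v_pos Lev_Good)
  qed
  also have "\<dots> = (\<Sum>Y\<in>QN k N. fl (v Y))"
    by (rule Q_fl[OF finite_QN QN_sub _ N, symmetric]) (auto simp: QN_def)
  also have "(\<Sum>u\<in>?B. fl (v u)) \<le> (\<Sum>u\<in>?B. 1 / real b ^ (N - 1))"
  proof (rule sum_mono)
    fix u assume "u \<in> ?B"
    then have uG: "u \<in> Good b" and lu: "length u = N" by (auto simp: Lev_def)
    have "fl (v u) \<le> 1 / v u" by (rule fl_le[OF v_pos[OF uG]])
    also have "\<dots> \<le> 1 / real b ^ (N - 1)" using v_ge[OF uG] lu bpos v_pos[OF uG] by (intro divide_left_mono) auto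
    finally show "fl (v u) \<le> 1 / real b ^ (N - 1)" .
  qed
  also have "\<dots> = real (card ?B) / real b ^ (N - 1)" by simp
  also have "\<dots> \<le> real (card (Yk k N)) / real b ^ (N - 1)"
  proof -
    have "?B \<subseteq> Yk k N" using Lev_sub by (auto simp: Yk_def)
    then have "card ?B \<le> card (Yk k N)" by (intro card_mono) auto
    then show ?thesis using bpos by (intro divide_right_mono) auto
  qed
  also have "\<dots> = real b * hk k N"
  proof -
    have "real b ^ N = real b * real b ^ (N - 1)" using N by (metis Suc_diff_1 less_le_trans zero_less_one power_Suc)
    then show ?thesis unfolding hk_def using bpos by (simp add: field_simps)
  qed
  finally show ?thesis by linarith
qed

lemma finite_sum_lower:
  assumes k: "k \<ge> 1" and N: "N \<ge> 1"
  shows "real b ^ p * (1 - hk 1 (J + p)) * (ln b - real b * hk k N - G k) \<le> (\<Sum>u\<in>Fin (QN k N) J. 1 / v u)"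
proof -
  define c where "c = real b ^ p * (1 - hk 1 (J + p))"
  have c0: "c \<ge> 0" unfolding c_def using hk_le1[of 1 "J + p"] by simp
  have "c * (ln b - real b * hk k N - G k) \<le> c * ((\<Sum>Y\<in>QN k N. fl (v Y)) - (\<Sum>Y\<in>QN k N. gl (v Y)))"
  proof (rule mult_left_mono[OF _ c0])
    have "(\<Sum>Y\<in>QN k N. gl (v Y)) \<le> G k"
      by (rule Q_gl_G[OF k finite_QN QN_sub, of _ N]) (auto simp: QN_def)
    then show "ln b - real b * hk k N - G k \<le> (\<Sum>Y\<in>QN k N. fl (v Y)) - (\<Sum>Y\<in>QN k N. gl (v Y))"
      using mass_lower[OF k N] by linarith
  qed
  also have "\<dots> = (\<Sum>Y\<in>QN k N. c * (fl (v Y) - gl (v Y)))"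
    by (simp add: sum_distrib_left sum_subtractf right_diff_distrib)
  also have "\<dots> \<le> (\<Sum>Y\<in>QN k N. \<Sum>S\<in>EJ J. 1 / v (Y @ S))"
  proof (rule sum_mono)
    fix Y assume "Y \<in> QN k N"
    then have YG: "Y \<in> Good b" by (auto simp: QN_def CK_def)
    have "c * (fl (v Y) - gl (v Y)) \<le> c * (1 / (v Y + 1))"
      by (rule mult_left_mono[OF inv1_ge[OF v_pos[OF YG]] c0])
    also have "\<dots> = real b ^ p * (1 - hk 1 (J + p)) / (v Y + 1)" by (simp add: c_def)
    also have "\<dots> \<le> (\<Sum>S\<in>EJ J. 1 / v (Y @ S))" by (rule inner_lower[OF YG])
    finally show "c * (fl (v Y) - gl (v Y)) \<le> (\<Sum>S\<in>EJ J. 1 / v (Y @ S))" .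
  qed
  also have "\<dots> = (\<Sum>u\<in>Fin (QN k N) J. 1 / v u)" by (rule sum_Fin[OF finite_QN QN_sub, symmetric])
  finally show ?thesis by (simp add: c_def)
qed

lemma hk_lim: "(\<lambda>n. hk k n) \<longlonglongrightarrow> 0"
proof (rule LIMSEQ_I)
  fix r :: real assume "r > 0"
  then obtain N where "\<forall>n\<ge>N. hk k n < r" using hk_small by blast
  then show "\<exists>no. \<forall>n\<ge>no. norm (hk k n - 0) < r" using hk_nonneg by auto
qed

lemma main:
  assumes k: "k \<ge> 1"
  shows "(\<lambda>L. 1 / v L) summable_on GK k \<and>
    \<bar>(\<Sum>\<^sub>\<infinity>L\<in>GK k. 1 / v L) - real b ^ p * ln b\<bar> \<le> real b ^ p * G k"
proof -
  have nn: "\<And>L. L \<in> GK k \<Longrightarrow> 0 \<le> 1 / v L" by simp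
  have summ: "(\<lambda>L. 1 / v L) summable_on GK k"
  proof (rule nonneg_bdd_above_summable_on[OF nn])
    show "bdd_above (sum (\<lambda>L. 1 / v L) ` {F. F \<subseteq> GK k \<and> finite F})"
      by (rule bdd_aboveI[of _ "real b ^ p * (ln b + G k)"]) (auto intro: finite_sum_upper[OF k])
  qed
  have up: "(\<Sum>\<^sub>\<infinity>L\<in>GK k. 1 / v L) \<le> real b ^ p * (ln b + G k)"
    by (rule infsum_le_finite_sums[OF summ]) (rule finite_sum_upper[OF k])
  define X where "X n = real b ^ p * (1 - hk 1 (n + p)) * (ln b - real b * hk k n - G k)" for n
  have X_le: "X n \<le> (\<Sum>\<^sub>\<infinity>L\<in>GK k. 1 / v L)" if "n \<ge> 1" for n
  proof -
    have "X n \<le> (\<Sum>u\<in>Fin (QN k n) n. 1 / v u)" unfolding X_def by (rule finite_sum_lower[OF k that])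
    also have "\<dots> \<le> (\<Sum>\<^sub>\<infinity>L\<in>GK k. 1 / v L)"
      by (rule finite_sum_le_infsum[OF summ finite_Fin[OF finite_QN] Fin_GK[OF QN_sub]]) simp
    finally show ?thesis .
  qed
  have h1: "(\<lambda>n. hk 1 (n + p)) \<longlonglongrightarrow> 0" by (rule LIMSEQ_ignore_initial_segment[OF hk_lim])
  have "X \<longlonglongrightarrow> real b ^ p * (1 - 0) * (ln b - real b * 0 - G k)"
    unfolding X_def by (intro tendsto_intros h1 hk_lim)
  then have lim: "X \<longlonglongrightarrow> real b ^ p * (ln b - G k)" by simp
  have ev: "\<exists>N. \<forall>n\<ge>N. X n \<le> (\<Sum>\<^sub>\<infinity>L\<in>GK k. 1 / v L)" using X_le by blast
  have lo: "real b ^ p * (ln b - G k) \<le> (\<Sum>\<^sub>\<infinity>L\<in>GK k. 1 / v L)"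
    by (rule LIMSEQ_le_const2[OF lim ev])
  show ?thesis using summ up lo by (simp add: abs_le_iff algebra_simps)
qed

lemma G_bound:
  assumes k: "k \<ge> 1"
  shows "real b ^ p * G k \<le> (real b - 1) * real b powr (real p - real (max k 2) + 1)"
proof -
  have bpos: "real b > 0" and b1: "real b \<ge> 1" using b2 by auto
  have pge: "p \<ge> 1" using wne by (cases w) auto
  have e1: "real b ^ (k + p - 2) * real b = real b ^ (p - 1) * real b ^ k"
  proof -
    have "k + p - 1 = Suc (k + p - 2)" using k pge by simp
    then have "real b ^ (k + p - 2) * real b = real b ^ (k + p - 1)"
      by (simp only: power_Suc2)
    also have "\<dots> = real b ^ (p - 1 + k)" using pge by (simp add: add.commute)
    also have "\<dots> = real b ^ (p - 1) * real b ^ k" by (rule power_add)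
    finally show ?thesis .
  qed
  have "real b ^ p * G k = (real b - 1) * real b ^ (p - 1) / real b ^ (k + p - 2)"
  proof -
    have "p = Suc (p - 1)" using pge by simp
    then have "real b ^ p = real b ^ (p - 1) * real b" by (metis power_Suc2)
    then show ?thesis unfolding G_def using bpos by (simp add: field_simps)
  qed
  also have "\<dots> = (real b - 1) * (real b / real b ^ k)"
    using e1 bpos by (simp add: field_simps)
  also have "real b / real b ^ k = real b powr (1 - real k)"
    using bpos by (simp add: powr_diff powr_realpow)
  also have "(real b - 1) * real b powr (1 - real k) \<le> (real b - 1) * real b powr (real p - real (max k 2) + 1)"
    using b1 pge k by (intro mult_left_mono powr_mono) auto
  finally show ?thesis .
qed

end

theorem theorem1:
  fixes b k :: nat and w :: "nat list"
  assumes "b \<ge> 2" and "length w \<ge> 1" and "\<forall>d\<in>set w. d < b" and "k \<ge> 1"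
  shows "(\<lambda>m. 1 / real m) summable_on occ_set b w k \<and>
    \<bar>(\<Sum>\<^sub>\<infinity>m\<in>occ_set b w k. 1 / real m) - real b ^ length w * ln (real b)\<bar>
      \<le> (real b - 1) * real b powr (real (length w) - real (max k 2) + 1)"
proof -
  interpret kw b w
    by unfold_locales (use assms in \<open>auto\<close>)
  have i1: "vl b (digits b m) = m" for m by (rule vl_digits[OF assms(1)])
  have i2: "digits b m \<in> GK k" if "m \<in> occ_set b w k" for m
    using that digits_good[OF assms(1)] by (auto simp: occ_set_def GK_def)
  have i3: "digits b (vl b L) = L" if "L \<in> GK k" for L
    using that digits_vl[OF assms(1)] by (auto simp: GK_def)
  have i4: "vl b L \<in> occ_set b w k" if "L \<in> GK k" for L
  proof -
    have "v L > 0" using that v_pos by (auto simp: GK_def)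
    then show ?thesis using that i3[OF that] by (auto simp: occ_set_def GK_def)
  qed
  have eqs: "(\<Sum>\<^sub>\<infinity>m\<in>occ_set b w k. 1 / real m) = (\<Sum>\<^sub>\<infinity>L\<in>GK k. 1 / v L)"
    by (rule infsum_reindex_bij_witness[of _ "vl b" "digits b"]) (auto simp: i1 i2 i3 i4)
  have eqm: "((\<lambda>m. 1 / real m) summable_on occ_set b w k) = ((\<lambda>L. 1 / v L) summable_on GK k)"
    by (rule summable_on_reindex_bij_witness[of _ "vl b" "digits b"]) (auto simp: i1 i2 i3 i4)
  have M1: "(\<lambda>L. 1 / v L) summable_on GK k" and
    M2: "\<bar>(\<Sum>\<^sub>\<infinity>L\<in>GK k. 1 / v L) - real b ^ p * ln b\<bar> \<le> real b ^ p * G k"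
    using main[OF assms(4)] by auto
  have "\<bar>(\<Sum>\<^sub>\<infinity>m\<in>occ_set b w k. 1 / real m) - real b ^ p * ln b\<bar>
      \<le> (real b - 1) * real b powr (real p - real (max k 2) + 1)"
    unfolding eqs using M2 G_bound[OF assms(4)] by (rule order.trans)
  then show ?thesis using M1 eqm by simp
qed

end
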